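(* Let $G$ be a graph with $n$ nodes and graph Laplacian $\mathbf{L}$, and let $\mathbf{P},\mathbf{Q}\in\mathbb{R}^{n\times d}$. Then the matrix $[\mathbf{P}\ \mathbf{Q}]\in\mathbb{R}^{n\times 2d}$ (column-wise concatenation) is node- and adjacency-identifying if $\mathbf{L}=\mathbf{P}\mathbf{Q}^T$.
   Context: Graphs are finite, undirected, without self-loops and without isolated nodes; $\mathbf{L}=\mathbf{D}-\mathbf{A}(G)$ with $\mathbf{D}$ the degree matrix and $\mathbf{A}(G)$ the adjacency matrix; $d_k>0$ is a fixed constant. A matrix $\mathbf{R}\in\mathbb{R}^{n\times e}$ is node-identifying if there exist $\mathbf{W}^Q,\mathbf{W}^K$ (with $e$ rows) such that $\tilde{\mathbf{R}}=\frac{1}{\sqrt{d_k}}\mathbf{R}\mathbf{W}^Q(\mathbf{R}\mathbf{W}^K)^T$ satisfies $\tilde{\mathbf{R}}_{ij}=\max_k\tilde{\mathbf{R}}_{ik}\iff i=j$; adjacency-identifying if for some (possibly different) such matrices $\tilde{\mathbf{R}}_{ij}=\max_k\tilde{\mathbf{R}}_{ik}\iff\mathbf{A}(G)_{ij}=1$. *)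

theory Defs
  imports "Jordan_Normal_Form.Matrix"
begin

definition graph_no_isolated :: "nat \<Rightarrow> (nat \<Rightarrow> nat \<Rightarrow> bool) \<Rightarrow> bool" where
  "graph_no_isolated n E \<longleftrightarrow>
     (\<forall>i<n. \<forall>j<n. E i j \<longrightarrow> E j i) \<and>
     (\<forall>i<n. \<not> E i i) \<and>
     (\<forall>i<n. \<exists>j<n. E i j)"

definition adjacency_mat :: "nat \<Rightarrow> (nat \<Rightarrow> nat \<Rightarrow> bool) \<Rightarrow> real mat" where
  "adjacency_mat n E = mat n n (\<lambda>(i,j). if E i j then 1 else 0)"

definition degree_mat :: "nat \<Rightarrow> (nat \<Rightarrow> nat \<Rightarrow> bool) \<Rightarrow> real mat" where
  "degree_mat n E = mat n n (\<lambda>(i,j). if i = j then real (card {k. k < n \<and> E i k}) else 0)"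

definition laplacian_mat :: "nat \<Rightarrow> (nat \<Rightarrow> nat \<Rightarrow> bool) \<Rightarrow> real mat" where
  "laplacian_mat n E = degree_mat n E - adjacency_mat n E"

definition concat_cols :: "real mat \<Rightarrow> real mat \<Rightarrow> real mat" where
  "concat_cols P Q = mat (dim_row P) (dim_col P + dim_col Q)
     (\<lambda>(i,j). if j < dim_col P then P $$ (i,j) else Q $$ (i, j - dim_col P))"

definition attn_scores :: "real \<Rightarrow> real mat \<Rightarrow> real mat \<Rightarrow> real mat \<Rightarrow> real mat" where
  "attn_scores dk R WQ WK = (1 / sqrt dk) \<cdot>\<^sub>m (R * WQ * transpose_mat (R * WK))"

definition row_max :: "real mat \<Rightarrow> nat \<Rightarrow> real" where
  "row_max M i = Max {M $$ (i,k) | k. k < dim_col M}"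

definition node_identifying :: "real \<Rightarrow> real mat \<Rightarrow> bool" where
  "node_identifying dk R \<longleftrightarrow>
     (\<exists>m WQ WK. WQ \<in> carrier_mat (dim_col R) m \<and> WK \<in> carrier_mat (dim_col R) m \<and>
        (let S = attn_scores dk R WQ WK in
          \<forall>i<dim_row R. \<forall>j<dim_row R. (S $$ (i,j) = row_max S i \<longleftrightarrow> i = j)))"

definition adjacency_identifying :: "real \<Rightarrow> real mat \<Rightarrow> real mat \<Rightarrow> bool" where
  "adjacency_identifying dk A R \<longleftrightarrow>
     (\<exists>m WQ WK. WQ \<in> carrier_mat (dim_col R) m \<and> WK \<in> carrier_mat (dim_col R) m \<and>
        (let S = attn_scores dk R WQ WK in
          \<forall>i<dim_row R. \<forall>j<dim_row R. (S $$ (i,j) = row_max S i \<longleftrightarrow> A $$ (i,j) = 1)))"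

end

theory Submission
  imports Defs
begin

lemma sum_single_nat:
  assumes "j < (N::nat)"
  shows "(\<Sum>k\<in>{0..<N}. f k * (if k = j then c else 0)) = f j * (c::real)"
proof -
  have "(\<Sum>k\<in>{0..<N}. f k * (if k = j then c else 0)) = (\<Sum>k\<in>{0..<N}. if k = j then f k * c else 0)"
    by (rule sum.cong) auto
  also have "\<dots> = f j * c" using assms by (simp add: sum.delta)
  finally show ?thesis .
qed

lemma RWQ:
  assumes P: "P \<in> carrier_mat n d" and Q: "Q \<in> carrier_mat n d"
  shows "concat_cols P Q * mat (2*d) d (\<lambda>(i,j). if i = j then c else 0) = c \<cdot>\<^sub>m P"
proof (rule eq_matI)
  fix i j assume i: "i < dim_row (c \<cdot>\<^sub>m P)" and j: "j < dim_col (c \<cdot>\<^sub>m P)"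
  have i': "i < n" and j': "j < d" using i j P by auto
  have "(concat_cols P Q * mat (2*d) d (\<lambda>(i,j). if i = j then c else 0)) $$ (i,j)
     = (\<Sum>k\<in>{0..<2*d}. (if k < d then P $$ (i,k) else Q $$ (i, k - d)) * (if k = j then c else 0))"
    using i' j' P Q by (auto simp: concat_cols_def scalar_prod_def carrier_matD[OF P] intro!: sum.cong)
  also have "\<dots> = (if j < d then P $$ (i,j) else Q $$ (i, j - d)) * c"
    using j' by (intro sum_single_nat) auto
  also have "\<dots> = (c \<cdot>\<^sub>m P) $$ (i,j)" using i' j' P by simp
  finally show "(concat_cols P Q * mat (2*d) d (\<lambda>(i,j). if i = j then c else 0)) $$ (i,j) = (c \<cdot>\<^sub>m P) $$ (i,j)" .
qed (use P Q in \<open>auto simp: concat_cols_def\<close>)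

lemma RWK:
  assumes P: "P \<in> carrier_mat n d" and Q: "Q \<in> carrier_mat n d"
  shows "concat_cols P Q * mat (2*d) d (\<lambda>(i,j). if i = j + d then 1 else 0) = Q"
proof (rule eq_matI)
  fix i j assume i: "i < dim_row Q" and j: "j < dim_col Q"
  have i': "i < n" and j': "j < d" using i j Q by auto
  have "(concat_cols P Q * mat (2*d) d (\<lambda>(i,j). if i = j + d then 1 else 0)) $$ (i,j)
     = (\<Sum>k\<in>{0..<2*d}. (if k < d then P $$ (i,k) else Q $$ (i, k - d)) * (if k = j + d then 1 else 0))"
    using i' j' P Q by (auto simp: concat_cols_def scalar_prod_def carrier_matD[OF P] intro!: sum.cong)
  also have "\<dots> = (if j + d < d then P $$ (i,j+d) else Q $$ (i, j + d - d)) * 1"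
    using j' by (intro sum_single_nat) auto
  also have "\<dots> = Q $$ (i,j)" by simp
  finally show "(concat_cols P Q * mat (2*d) d (\<lambda>(i,j). if i = j + d then 1 else 0)) $$ (i,j) = Q $$ (i,j)" .
qed (use P Q in \<open>auto simp: concat_cols_def\<close>)

lemma scores:
  assumes P: "P \<in> carrier_mat n d" and Q: "Q \<in> carrier_mat n d"
    and L: "laplacian_mat n E = P * transpose_mat Q"
    and i: "i < n" and j: "j < n"
  shows "attn_scores dk (concat_cols P Q) (mat (2*d) d (\<lambda>(i,j). if i = j then c else 0))
            (mat (2*d) d (\<lambda>(i,j). if i = j + d then 1 else 0)) $$ (i,j)
         = (c / sqrt dk) * ((if i = j then real (card {k. k < n \<and> E i k}) else 0) - (if E i j then 1 else 0))"
    and "dim_col (attn_scores dk (concat_cols P Q) (mat (2*d) d (\<lambda>(i,j). if i = j then c else 0))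
            (mat (2*d) d (\<lambda>(i,j). if i = j + d then 1 else 0))) = n"
proof -
  have e: "(c \<cdot>\<^sub>m P) * transpose_mat Q = c \<cdot>\<^sub>m (P * transpose_mat Q)"
    using P Q by (metis mult_smult_assoc_mat transpose_carrier_mat)
  have Lij: "(P * transpose_mat Q) $$ (i,j) = (if i = j then real (card {k. k < n \<and> E i k}) else 0) - (if E i j then 1 else 0)"
    using L[symmetric] i j by (simp add: laplacian_mat_def degree_mat_def adjacency_mat_def)
  show "attn_scores dk (concat_cols P Q) (mat (2*d) d (\<lambda>(i,j). if i = j then c else 0))
            (mat (2*d) d (\<lambda>(i,j). if i = j + d then 1 else 0)) $$ (i,j)
         = (c / sqrt dk) * ((if i = j then real (card {k. k < n \<and> E i k}) else 0) - (if E i j then 1 else 0))"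
    unfolding attn_scores_def RWQ[OF P Q] RWK[OF P Q] e
    using i j P Q Lij by simp
  show "dim_col (attn_scores dk (concat_cols P Q) (mat (2*d) d (\<lambda>(i,j). if i = j then c else 0))
            (mat (2*d) d (\<lambda>(i,j). if i = j + d then 1 else 0))) = n"
    unfolding attn_scores_def RWQ[OF P Q] RWK[OF P Q] using Q by simp
qed

lemma max_char:
  assumes "\<And>k. k < (n::nat) \<Longrightarrow> f k \<le> (v::real)" and "j0 < n" and "f j0 = v"
  shows "Max {f k | k. k < n} = v"
proof -
  have "{f k | k. k < n} = f ` {..<n}" by auto
  hence fin: "finite {f k | k. k < n}" by simp
  show ?thesis
    by (rule Max_eqI[OF fin]) (use assms in auto)
qed

lemma ni_intro:
  assumes "WQ \<in> carrier_mat (dim_col R) m" "WK \<in> carrier_mat (dim_col R) m"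
    "\<And>i j. i < dim_row R \<Longrightarrow> j < dim_row R \<Longrightarrow> (attn_scores dk R WQ WK $$ (i,j) = row_max (attn_scores dk R WQ WK) i \<longleftrightarrow> i = j)"
  shows "node_identifying dk R"
  using assms unfolding node_identifying_def Let_def by blast

lemma ai_intro:
  assumes "WQ \<in> carrier_mat (dim_col R) m" "WK \<in> carrier_mat (dim_col R) m"
    "\<And>i j. i < dim_row R \<Longrightarrow> j < dim_row R \<Longrightarrow> (attn_scores dk R WQ WK $$ (i,j) = row_max (attn_scores dk R WQ WK) i \<longleftrightarrow> A $$ (i,j) = 1)"
  shows "adjacency_identifying dk A R"
  using assms unfolding adjacency_identifying_def Let_def by blast

theorem lemmaF8:
  fixes n d :: nat and E :: "nat \<Rightarrow> nat \<Rightarrow> bool" and P Q :: "real mat" and dk :: real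
  assumes "dk > 0"
    and "graph_no_isolated n E"
    and "P \<in> carrier_mat n d" and "Q \<in> carrier_mat n d"
    and "laplacian_mat n E = P * transpose_mat Q"
  shows "node_identifying dk (concat_cols P Q) \<and>
         adjacency_identifying dk (adjacency_mat n E) (concat_cols P Q)"
proof -
  note P = assms(3) and Q = assms(4) and L = assms(5)
  have dr: "dim_row (concat_cols P Q) = n" and dc: "dim_col (concat_cols P Q) = 2*d"
    using P Q by (auto simp: concat_cols_def)
  have sym: "\<And>i j. i < n \<Longrightarrow> j < n \<Longrightarrow> E i j \<Longrightarrow> E j i"
    and irr: "\<And>i. i < n \<Longrightarrow> \<not> E i i"
    and nb: "\<And>i. i < n \<Longrightarrow> \<exists>j<n. E i j"
    using assms(2) unfolding graph_no_isolated_def by auto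
  define a where "a = 1 / sqrt dk"
  have a: "a > 0" using assms(1) by (simp add: a_def)
  define deg where "deg i = real (card {k. k < n \<and> E i k})" for i
  have deg: "deg i \<ge> 1" if ii: "i < n" for i
  proof -
    obtain j where "j < n" "E i j" using nb[OF ii] by auto
    hence "{k. k < n \<and> E i k} \<noteq> {}" by auto
    moreover have "finite {k. k < n \<and> E i k}" by simp
    ultimately have "card {k. k < n \<and> E i k} \<ge> 1"
      by (simp add: Suc_le_eq card_gt_0_iff)
    thus ?thesis by (simp add: deg_def)
  qed
  define S1 where "S1 = attn_scores dk (concat_cols P Q) (mat (2*d) d (\<lambda>(i,j). if i = j then 1 else 0))
            (mat (2*d) d (\<lambda>(i,j). if i = j + d then 1 else 0))"
  define S2 where "S2 = attn_scores dk (concat_cols P Q) (mat (2*d) d (\<lambda>(i,j). if i = j then -1 else 0))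
            (mat (2*d) d (\<lambda>(i,j). if i = j + d then 1 else 0))"
  have S1: "S1 $$ (i,j) = a * ((if i = j then deg i else 0) - (if E i j then 1 else 0))"
    if "i < n" "j < n" for i j
    unfolding S1_def a_def deg_def using scores(1)[OF P Q L that, of dk 1] by simp
  have S2: "S2 $$ (i,j) = a * ((if E i j then 1 else 0) - (if i = j then deg i else 0))"
    if "i < n" "j < n" for i j
    unfolding S2_def a_def deg_def using scores(1)[OF P Q L that, of dk "-1"]
    by (simp add: algebra_simps)
  have c1: "dim_col S1 = n" unfolding S1_def using Q by (simp add: attn_scores_def RWQ[OF P Q] RWK[OF P Q])
  have c2: "dim_col S2 = n" unfolding S2_def using Q by (simp add: attn_scores_def RWQ[OF P Q] RWK[OF P Q])
  have "node_identifying dk (concat_cols P Q)"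
  proof (rule ni_intro[where WQ="mat (2*d) d (\<lambda>(i,j). if i = j then 1 else 0)" and WK="mat (2*d) d (\<lambda>(i,j). if i = j + d then 1 else 0)"], unfold S1_def[symmetric])
    show "mat (2*d) d (\<lambda>(i,j). if i = j then 1 else 0) \<in> carrier_mat (dim_col (concat_cols P Q)) d"
      using dc by simp
    show "mat (2*d) d (\<lambda>(i,j). if i = j + d then 1 else 0) \<in> carrier_mat (dim_col (concat_cols P Q)) d"
      using dc by simp
    fix i j assume i: "i < dim_row (concat_cols P Q)" and j: "j < dim_row (concat_cols P Q)"
    hence i: "i < n" and j: "j < n" using dr by auto
    have rm: "row_max S1 i = a * deg i"
      unfolding row_max_def c1
    proof (rule max_char[OF _ i])
      fix k assume k: "k < n"
      show "S1 $$ (i,k) \<le> a * deg i"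
        using S1[OF i k] a deg[OF i] by (auto simp: mult_le_cancel_left)
    qed (use S1[OF i i] irr[OF i] in simp)
    have "S1 $$ (i,j) = row_max S1 i \<longleftrightarrow> i = j"
      using S1[OF i j] rm a deg[OF i] irr[OF i] by auto
    thus "(S1 $$ (i,j) = row_max S1 i) = (i = j)" .
  qed
  moreover have "adjacency_identifying dk (adjacency_mat n E) (concat_cols P Q)"
  proof (rule ai_intro[where WQ="mat (2*d) d (\<lambda>(i,j). if i = j then -1 else 0)" and WK="mat (2*d) d (\<lambda>(i,j). if i = j + d then 1 else 0)"], unfold S2_def[symmetric])
    show "mat (2*d) d (\<lambda>(i,j). if i = j then -1 else 0) \<in> carrier_mat (dim_col (concat_cols P Q)) d"
      using dc by simp
    show "mat (2*d) d (\<lambda>(i,j). if i = j + d then 1 else 0) \<in> carrier_mat (dim_col (concat_cols P Q)) d"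
      using dc by simp
    fix i j assume i: "i < dim_row (concat_cols P Q)" and j: "j < dim_row (concat_cols P Q)"
    hence i: "i < n" and j: "j < n" using dr by auto
    obtain j0 where j0: "j0 < n" "E i j0" using nb[OF i] by auto
    have rm: "row_max S2 i = a"
      unfolding row_max_def c2
    proof (rule max_char[OF _ j0(1)])
      fix k assume k: "k < n"
      show "S2 $$ (i,k) \<le> a"
        using S2[OF i k] a deg[OF i] by auto
    qed (use S2[OF i j0(1)] j0 irr[OF i] in auto)
    have "S2 $$ (i,j) = row_max S2 i \<longleftrightarrow> E i j"
      using S2[OF i j] rm a deg[OF i] irr[OF i] by auto
    thus "(S2 $$ (i,j) = row_max S2 i) = (adjacency_mat n E $$ (i,j) = 1)"
      using i j by (simp add: adjacency_mat_def)
  qed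
  ultimately show ?thesis by blast
qed

end
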